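(* For integers $a\geq1$ and $n\geq1$ let $f_{2n+1}(a)=\sum_{k=-(a-1)}^{a-1}\big(1-\frac{k^2}{a^2}\big)^{n}$. Then: (i) for every integer $a\geq1$, $f_3(a)=\frac{4a}{3}-\frac{1}{3a}$; (ii) for every $n\geq2$, as $a\to\infty$ ($a$ integer), $$f_{2n+1}(a)=\frac{2^{2n+1}(n!)^2}{(2n+1)!}\,a+o(a^{-2});$$ (iii) for every $n\geq2$, with $m=2n+1$, $p_k=f_{m}(a)^{-1}(1-k^2/a^2)^{n}$ for $|k|\leq a-1$ (and $p_k=0$ otherwise) and $U(a)=\sum_k k^2p_k$, one has, as $a\to\infty$, $$U(a)=\frac{a^2}{m+2}+o(a^{-1}).$$
   Context: $f_m(a)$ is the partition function of the discrete Tsallis maximizer with $q>1$, written with $m=\frac{q+1}{q-1}$ (so the exponent is $\frac{m-1}{2}=n$) and $a^2=k_BT$; $U$ is the mean energy (variance). *)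

theory Defs
  imports "HOL-Analysis.Analysis" "HOL-Library.Landau_Symbols"
begin

definition tsallis_f :: "nat \<Rightarrow> nat \<Rightarrow> real" where
  "tsallis_f n a = (\<Sum>k\<in>{-(int a - 1)..int a - 1}. (1 - (real_of_int k)^2 / (real a)^2) ^ n)"

definition tsallis_p :: "nat \<Rightarrow> nat \<Rightarrow> int \<Rightarrow> real" where
  "tsallis_p n a k = (if \<bar>k\<bar> \<le> int a - 1
      then (1 - (real_of_int k)^2 / (real a)^2) ^ n / tsallis_f n a else 0)"

definition tsallis_U :: "nat \<Rightarrow> nat \<Rightarrow> real" where
  "tsallis_U n a = (\<Sum>k\<in>{-(int a - 1)..int a - 1}. (real_of_int k)^2 * tsallis_p n a k)"

end

theory Submission
  imports Defs
begin

definition PI :: "nat \<Rightarrow> real \<Rightarrow> real" where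
  "PI n x = (\<Sum>i\<le>n. real (n choose i) * (-1)^i * x^(2*i+1) / (2*i+1))"
definition KI :: "nat \<Rightarrow> real \<Rightarrow> real" where
  "KI n x = (\<Sum>i\<le>n. real (n choose i) * (-1)^i * x^(2*i+3) / (2*i+3))"

lemma binom_sq: "(\<Sum>i\<le>n. real (n choose i) * (-1)^i * x^(2*i)) = (1 - x^2)^n"
proof -
  have "(1 - x^2)^n = (-(x^2) + 1)^n" by simp
  also have "\<dots> = (\<Sum>i\<le>n. real (n choose i) * (-(x^2))^i * 1^(n-i))"
    by (rule binomial_ring)
  also have "\<dots> = (\<Sum>i\<le>n. real (n choose i) * (-1)^i * x^(2*i))"
  proof (intro sum.cong refl)
    fix i assume "i \<in> {..n}"
    have "(-(x^2))^i = (-1)^i * x^(2*i)" by (subst power_minus) (simp add: power_mult)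
    then show "real (n choose i) * (-(x^2))^i * 1^(n-i) = real (n choose i) * (-1)^i * x^(2*i)"
      by simp
  qed
  finally show ?thesis by (rule sym)
qed

lemma PI_deriv: "(PI n has_real_derivative (1 - x^2)^n) (at x)"
proof -
  have "(PI n has_real_derivative (\<Sum>i\<le>n. real (n choose i) * (-1)^i * (real (2*i+1) * x^(2*i)) / (2*i+1))) (at x)"
    unfolding PI_def by (intro derivative_eq_intros) auto
  moreover have "(\<Sum>i\<le>n. real (n choose i) * (-1)^i * (real (2*i+1) * x^(2*i)) / (2*i+1)) = (1 - x^2)^n"
    by (subst binom_sq[symmetric], intro sum.cong refl) (simp add: field_simps)
  ultimately show ?thesis by simp
qed

lemma KI_deriv: "(KI n has_real_derivative x^2 * (1 - x^2)^n) (at x)"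
proof -
  have "(KI n has_real_derivative (\<Sum>i\<le>n. real (n choose i) * (-1)^i * (real (2*i+3) * x^(2*i+2)) / (2*i+3))) (at x)"
    unfolding KI_def by (intro derivative_eq_intros) auto
  moreover have "(\<Sum>i\<le>n. real (n choose i) * (-1)^i * (real (2*i+3) * x^(2*i+2)) / (2*i+3)) = x^2 * (1 - x^2)^n"
    by (subst binom_sq[symmetric], subst sum_distrib_left, intro sum.cong refl) (simp add: field_simps power_add power2_eq_square)
  ultimately show ?thesis by simp
qed

lemma PI_rec: "(2*n+3) * PI (Suc n) 1 = (2*n+2) * PI n 1"
proof -
  define G where "G x = (2*n+3) * PI (Suc n) x - (2*n+2) * PI n x - x * (1 - x^2)^(Suc n)" for x :: real
  have d0: "DERIV G x :> 0" for x
  proof -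
    have d3: "DERIV (\<lambda>x. x * (1 - x^2)^(Suc n)) x :> (1 * (1 - x^2)^(Suc n) + x * (real (Suc n) * (1-x^2)^n * (0 - 2 * x)))"
      by (intro derivative_eq_intros) (auto simp: power2_eq_square)
    have "DERIV G x :> (2*n+3) * (1 - x^2)^(Suc n) - (2*n+2) * (1-x^2)^n
        - (1 * (1 - x^2)^(Suc n) + x * (real (Suc n) * (1-x^2)^n * (0 - 2 * x)))"
      unfolding G_def
      by (rule DERIV_diff[OF DERIV_diff[OF DERIV_cmult[OF PI_deriv] DERIV_cmult[OF PI_deriv]] d3])
    moreover have "(2*n+3) * (1 - x^2)^(Suc n) - (2*n+2) * (1-x^2)^n
        - (1 * (1 - x^2)^(Suc n) + x * (real (Suc n) * (1-x^2)^n * (0 - 2 * x))) = (0::real)"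
      by (simp add: algebra_simps power2_eq_square)
    ultimately show ?thesis by simp
  qed
  have "G 1 = G 0" using DERIV_isconst_all[of G 1 0] d0 by blast
  moreover have "PI m 0 = 0" for m by (simp add: PI_def)
  ultimately show ?thesis by (simp add: G_def)
qed

lemma KI_rel: "KI n 1 = PI n 1 - PI (Suc n) 1"
proof -
  define G where "G x = PI (Suc n) x - PI n x + KI n x" for x :: real
  have d0: "DERIV G x :> 0" for x
  proof -
    have "DERIV G x :> (1 - x^2)^(Suc n) - (1-x^2)^n + x^2 * (1 - x^2)^n"
      unfolding G_def by (rule DERIV_add[OF DERIV_diff[OF PI_deriv PI_deriv] KI_deriv])
    moreover have "(1 - x^2)^(Suc n) - (1-x^2)^n + x^2 * (1 - x^2)^n = (0::real)"
      by (simp add: algebra_simps)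
    ultimately show ?thesis by simp
  qed
  have "G 1 = G 0" using DERIV_isconst_all[of G 1 0] d0 by blast
  moreover have "PI m 0 = 0" for m by (simp add: PI_def)
  moreover have "KI m 0 = 0" for m by (simp add: KI_def power_0_left)
  ultimately show ?thesis by (simp add: G_def)
qed

lemma KI_PI: "KI n 1 = PI n 1 / (2*n+3)"
proof -
  have "KI n 1 * (2*n+3) = PI n 1 * (2*n+3) - (2*n+3) * PI (Suc n) 1"
    unfolding KI_rel by (simp add: algebra_simps)
  also have "\<dots> = PI n 1" using PI_rec[of n] by (simp add: algebra_simps)
  finally show ?thesis by (simp add: field_simps)
qed

lemma PI_closed: "2 * PI n 1 = 2 ^ (2*n+1) * (fact n)^2 / fact (2*n+1)"
proof (induction n)
  case 0
  then show ?case by (simp add: PI_def)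
next
  case (Suc n)
  define F where "F = (fact n :: real)"
  define G where "G = (fact (2*n+1) :: real)"
  define A where "A = real (2*n+2)"
  define B where "B = real (2*n+3)"
  have e1: "fact (2 * Suc n + 1) = B * A * G"
    unfolding A_def B_def G_def by (simp add: algebra_simps)
  have e2: "fact (Suc n) = real (n+1) * F" unfolding F_def by simp
  have e3: "(2::real) ^ (2*Suc n+1) = 4 * 2^(2*n+1)" by simp
  have "G > 0" unfolding G_def by simp
  have "B > 0" unfolding B_def by simp
  have "B * PI (Suc n) 1 = A * PI n 1" using PI_rec[of n] unfolding A_def B_def by simp
  then have "2 * PI (Suc n) 1 = A/B * (2 * PI n 1)"
    using \<open>B > 0\<close> by (simp add: field_simps)
  also have "\<dots> = A/B * (2 ^ (2*n+1) * F^2 / G)"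
    using Suc by (simp add: F_def G_def)
  also have "\<dots> = (A*A*(2 ^ (2*n+1) * F^2)) / (B*A*G)"
  proof -
    have gen: "A/B * (X/G) = (A*A*X)/(B*A*G)" if "A > 0" "B > 0" for A B X :: real
      using that by simp
    show ?thesis by (rule gen) (auto simp: A_def B_def)
  qed
  also have "(A*A*(2 ^ (2*n+1) * F^2)) / (B*A*G) = 4 * 2^(2*n+1) * (real (n+1)*F)^2 / (B*A*G)"
  proof -
    have "A*A*(2 ^ (2*n+1) * F^2) = 4 * 2^(2*n+1) * (real (n+1)*F)^2"
      by (simp add: A_def algebra_simps power2_eq_square)
    then show ?thesis by (rule arg_cong[where f="\<lambda>t. t/(B*A*G)"])
  qed
  finally have X: "2 * PI (Suc n) 1 = 4 * 2^(2*n+1) * (real (n+1)*F)^2 / (B*A*G)" .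
  show ?case unfolding e1 e2 e3 by (rule X)
qed

lemma PI_pos: "PI n 1 > 0"
proof -
  have "2 ^ (2*n+1) * (fact n)^2 / fact (2*n+1) > (0::real)"
    by (intro divide_pos_pos mult_pos_pos) auto
  then have "2 * PI n 1 > 0" by (subst PI_closed)
  then show ?thesis by simp
qed

lemma binom_tail:
  fixes x :: real
  assumes x: "x \<ge> 1"
  shows "\<bar>(x - 1)^(q+r) - (\<Sum>j<r. real ((q+r) choose j) * (-1)^j * x^(q+r-j))\<bar> \<le> 2^(q+r) * x^q"
proof -
  define m where "m = q + r"
  have "(x - 1)^m = (-1 + x)^m" by simp
  also have "\<dots> = (\<Sum>j\<le>m. real (m choose j) * (-1)^j * x^(m-j))"
    by (rule binomial_ring)
  finally have e: "(x - 1)^m = (\<Sum>j\<le>m. real (m choose j) * (-1)^j * x^(m-j))" .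
  have split: "{..m} = {..<r} \<union> {r..m}" unfolding m_def by auto
  have "(\<Sum>j\<le>m. real (m choose j) * (-1)^j * x^(m-j))
      = (\<Sum>j<r. real (m choose j) * (-1)^j * x^(m-j)) + (\<Sum>j\<in>{r..m}. real (m choose j) * (-1)^j * x^(m-j))"
    unfolding split by (rule sum.union_disjoint) auto
  hence "(x - 1)^m - (\<Sum>j<r. real (m choose j) * (-1)^j * x^(m-j)) = (\<Sum>j\<in>{r..m}. real (m choose j) * (-1)^j * x^(m-j))"
    using e by simp
  hence "\<bar>(x - 1)^m - (\<Sum>j<r. real (m choose j) * (-1)^j * x^(m-j))\<bar> \<le> (\<Sum>j\<in>{r..m}. \<bar>real (m choose j) * (-1)^j * x^(m-j)\<bar>)"
    by (simp add: sum_abs)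
  also have "\<dots> \<le> (\<Sum>j\<in>{r..m}. real (m choose j) * x^q)"
  proof (intro sum_mono)
    fix j assume j: "j \<in> {r..m}"
    have "x^(m-j) \<le> x^q" using j x unfolding m_def by (intro power_increasing) auto
    then show "\<bar>real (m choose j) * (-1)^j * x^(m-j)\<bar> \<le> real (m choose j) * x^q"
      using x by (simp add: abs_mult power_abs mult_left_mono)
  qed
  also have "\<dots> \<le> (\<Sum>j\<le>m. real (m choose j) * x^q)"
    using x by (intro sum_mono2) auto
  also have "\<dots> = 2^m * x^q"
  proof -
    have "(\<Sum>j\<le>m. real (m choose j)) = 2^m"
      using choose_row_sum[of m] by (metis of_nat_numeral of_nat_power of_nat_sum)
    then show ?thesis by (simp add: sum_distrib_right[symmetric])
  qed
  finally show ?thesis unfolding m_def .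
qed

lemma sum5: "(\<Sum>j<5. (f::nat\<Rightarrow>real) j) = f 0 + f 1 + f 2 + f 3 + (f 4 :: real)"
  by (simp add: eval_nat_numeral)
lemma sum4: "(\<Sum>j<4. (f::nat\<Rightarrow>real) j) = f 0 + f 1 + f 2 + (f 3 :: real)"
  by (simp add: eval_nat_numeral)
lemma sum3: "(\<Sum>j<3. (f::nat\<Rightarrow>real) j) = f 0 + f 1 + (f 2 :: real)"
  by (simp add: eval_nat_numeral)

lemma ch2: "real (m choose 2) * 2 = real m * (real m - 1)"
proof (induction m)
  case (Suc m)
  have "Suc m choose 2 = m + (m choose 2)"
    by (simp add: numeral_2_eq_2)
  then show ?case using Suc by (simp add: algebra_simps)
qed simp

lemma ch3: "real (m choose 3) * 6 = real m * (real m - 1) * (real m - 2)"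
proof (induction m)
  case (Suc m)
  have "Suc m choose 3 = (m choose 2) + (m choose 3)"
    by (simp add: numeral_3_eq_3 numeral_2_eq_2)
  then show ?case using Suc ch2[of m] by (simp add: algebra_simps)
qed simp

lemma ch4: "real (m choose 4) * 24 = real m * (real m - 1) * (real m - 2) * (real m - 3)"
proof (induction m)
  case (Suc m)
  have "Suc m choose 4 = (m choose 3) + (m choose 4)"
    by (simp add: eval_nat_numeral)
  then show ?case using Suc ch3[of m] by (simp add: algebra_simps)
qed simp

definition Qf :: "nat \<Rightarrow> real \<Rightarrow> real" where
  "Qf q x = x^(q+5)/(q+5) + x^(q+4)/2 + (q+4) * x^(q+3)/12"

definition Cq :: "nat \<Rightarrow> real" where
  "Cq q = 2^(q+5) + 2^(q+4) + (q+4)*2^(q+3)"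

lemma e_bound:
  fixes x :: real assumes x: "x \<ge> 1"
  shows "\<bar>Qf q x - Qf q (x-1) - x^(q+4)\<bar> \<le> Cq q * x^q"
proof -
  define y where "y = x^q"
  define r where "r = real q"
  have y0: "y \<ge> 0" using x unfolding y_def by simp
  have c52: "real ((q+5) choose 2) = (r+5)*(r+4)/2" using ch2[of "q+5"] unfolding r_def by (simp add: eq_divide_eq algebra_simps)
  have c53: "real ((q+5) choose 3) = (r+5)*(r+4)*(r+3)/6" using ch3[of "q+5"] unfolding r_def by (simp add: eq_divide_eq algebra_simps)
  have c54: "real ((q+5) choose 4) = (r+5)*(r+4)*(r+3)*(r+2)/24" using ch4[of "q+5"] unfolding r_def by (simp add: eq_divide_eq algebra_simps)
  have c42: "real ((q+4) choose 2) = (r+4)*(r+3)/2" using ch2[of "q+4"] unfolding r_def by (simp add: eq_divide_eq algebra_simps)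
  have c43: "real ((q+4) choose 3) = (r+4)*(r+3)*(r+2)/6" using ch3[of "q+4"] unfolding r_def by (simp add: eq_divide_eq algebra_simps)
  have c32: "real ((q+3) choose 2) = (r+3)*(r+2)/2" using ch2[of "q+3"] unfolding r_def by (simp add: eq_divide_eq algebra_simps)
  define P1 where "P1 = y*x^5 - (r+5)*y*x^4 + (r+5)*(r+4)/2*y*x^3 - (r+5)*(r+4)*(r+3)/6*y*x^2 + (r+5)*(r+4)*(r+3)*(r+2)/24*y*x"
  define P2 where "P2 = y*x^4 - (r+4)*y*x^3 + (r+4)*(r+3)/2*y*x^2 - (r+4)*(r+3)*(r+2)/6*y*x"
  define P3 where "P3 = y*x^3 - (r+3)*y*x^2 + (r+3)*(r+2)/2*y*x"
  have s1: "(\<Sum>j<5. real ((q+5) choose j) * (-1)^j * x^(q+5-j)) = P1"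
    unfolding sum5 P1_def y_def c52 c53 c54 by (simp add: power_add r_def eval_nat_numeral field_simps)
  have s2: "(\<Sum>j<4. real ((q+4) choose j) * (-1)^j * x^(q+4-j)) = P2"
    unfolding sum4 P2_def y_def c42 c43 by (simp add: power_add r_def eval_nat_numeral field_simps)
  have s3: "(\<Sum>j<3. real ((q+3) choose j) * (-1)^j * x^(q+3-j)) = P3"
    unfolding sum3 P3_def y_def c32 by (simp add: power_add r_def eval_nat_numeral field_simps)
  define E1 where "E1 = (x-1)^(q+5) - P1"
  define E2 where "E2 = (x-1)^(q+4) - P2"
  define E3 where "E3 = (x-1)^(q+3) - P3"
  have b1: "\<bar>E1\<bar> \<le> 2^(q+5) * y" using binom_tail[OF x, of q 5] unfolding s1 E1_def y_def .
  have b2: "\<bar>E2\<bar> \<le> 2^(q+4) * y" using binom_tail[OF x, of q 4] unfolding s2 E2_def y_def .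
  have b3: "\<bar>E3\<bar> \<le> 2^(q+3) * y" using binom_tail[OF x, of q 3] unfolding s3 E3_def y_def .
  have id: "Qf q x - Qf q (x-1) - x^(q+4) = -(E1/(r+5) + E2/2 + (r+4)*E3/12)"
  proof -
    have "(x-1)^(q+5) = P1 + E1" "(x-1)^(q+4) = P2 + E2" "(x-1)^(q+3) = P3 + E3"
      unfolding E1_def E2_def E3_def by simp_all
    moreover have "x^(q+5) = y*x^5" "x^(q+4) = y*x^4" "x^(q+3) = y*x^3"
      unfolding y_def by (simp_all add: power_add)
    ultimately have "Qf q x - Qf q (x-1) - x^(q+4) = y*x^5/(r+5) + y*x^4/2 + (r+4)*(y*x^3)/12
        - ((P1+E1)/(r+5) + (P2+E2)/2 + (r+4)*(P3+E3)/12) - y*x^4"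
      unfolding Qf_def r_def by simp
    also have "\<dots> = -(E1/(r+5) + E2/2 + (r+4)*E3/12)"
    proof -
      have r: "r + 5 \<noteq> 0" unfolding r_def by simp
      have h: "P1 = (r+5) * (y*x^5/(r+5) - y*x^4 + (r+4)/2*y*x^3 - (r+4)*(r+3)/6*y*x^2 + (r+4)*(r+3)*(r+2)/24*y*x)"
        unfolding P1_def using r by (simp add: field_simps)
      have h1: "(P1+E1)/(r+5) = y*x^5/(r+5) - y*x^4 + (r+4)/2*y*x^3 - (r+4)*(r+3)/6*y*x^2 + (r+4)*(r+3)*(r+2)/24*y*x + E1/(r+5)"
        unfolding add_divide_distrib h using r by simp
      show ?thesis unfolding h1 P2_def P3_def
        by (simp add: field_simps)
    qed
    finally show ?thesis .
  qed
  have "\<bar>Qf q x - Qf q (x-1) - x^(q+4)\<bar> \<le> \<bar>E1\<bar>/(r+5) + \<bar>E2\<bar>/2 + (r+4)*\<bar>E3\<bar>/12"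
  proof -
    have tri3: "\<bar>-(A + B + C)\<bar> \<le> \<bar>A\<bar> + \<bar>B\<bar> + \<bar>C\<bar>" for A B C :: real
      by (auto simp: abs_if)
    have r0: "r \<ge> 0" unfolding r_def by simp
    have q1: "\<bar>E1/(r+5)\<bar> = \<bar>E1\<bar>/(r+5)" using r0 by simp
    have q3: "\<bar>(r+4)*E3/12\<bar> = (r+4)*\<bar>E3\<bar>/12" using r0 by (simp add: abs_mult)
    have q2: "\<bar>E2/2\<bar> = \<bar>E2\<bar>/2" by simp
    show ?thesis unfolding id using tri3[of "E1/(r+5)" "E2/2" "(r+4)*E3/12"] unfolding q1 q2 q3 .
  qed
  also have "\<dots> \<le> \<bar>E1\<bar> + \<bar>E2\<bar> + (r+4)*\<bar>E3\<bar>"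
  proof -
    have r0: "r \<ge> 0" unfolding r_def by simp
    have "\<bar>E1\<bar> * 1 \<le> \<bar>E1\<bar> * (r+5)" using r0 by (intro mult_left_mono) auto
    then have k1: "\<bar>E1\<bar>/(r+5) \<le> \<bar>E1\<bar>" using r0 by (simp add: divide_le_eq)
    have k2: "\<bar>E2\<bar>/2 \<le> \<bar>E2\<bar>" by simp
    have k3: "(r+4)*\<bar>E3\<bar>/12 \<le> (r+4)*\<bar>E3\<bar>" using r0 by simp
    show ?thesis using k1 k2 k3 by linarith
  qed
  also have "\<dots> \<le> 2^(q+5) * y + 2^(q+4) * y + (r+4)*(2^(q+3) * y)"
    using b1 b2 b3 unfolding r_def by (intro add_mono mult_left_mono) auto
  also have "\<dots> = Cq q * x^q" unfolding Cq_def y_def r_def by (simp add: algebra_simps)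
  finally show ?thesis .
qed


definition Sp :: "nat \<Rightarrow> nat \<Rightarrow> real" where
  "Sp p a = (\<Sum>k=1..a. real k ^ p)"

lemma Sp_Suc: "Sp p (Suc a) = Sp p a + real (Suc a) ^ p"
  unfolding Sp_def by simp

lemma Sp_0: "Sp p 0 = 0" unfolding Sp_def by simp

lemma Cq_nonneg: "Cq q \<ge> 0" unfolding Cq_def by simp

lemma S_bound: "\<bar>Sp (q+4) a - Qf q (real a)\<bar> \<le> Cq q * real a ^ (q+1)"
proof (induction a)
  case 0
  then show ?case by (simp add: Sp_def Qf_def power_0_left)
next
  case (Suc a)
  define x where "x = real (Suc a)"
  have x1: "x \<ge> 1" unfolding x_def by simp
  have xa: "x - 1 = real a" unfolding x_def by simp
  have e: "\<bar>Qf q x - Qf q (real a) - x^(q+4)\<bar> \<le> Cq q * x^q"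
    using e_bound[OF x1, of q] unfolding xa .
  have "Sp (q+4) (Suc a) - Qf q x = (Sp (q+4) a - Qf q (real a)) - (Qf q x - Qf q (real a) - x^(q+4))"
    unfolding Sp_Suc x_def by simp
  hence "\<bar>Sp (q+4) (Suc a) - Qf q x\<bar> \<le> Cq q * real a ^ (q+1) + Cq q * x^q"
    using Suc.IH e by linarith
  also have "\<dots> \<le> Cq q * x^(q+1)"
  proof -
    have "real a ^ (q+1) = real a ^ q * real a" by simp
    also have "\<dots> \<le> x^q * real a" unfolding x_def by (intro mult_right_mono power_mono) auto
    finally have "real a ^ (q+1) + x^q \<le> x^q * real a + x^q" by simp
    also have "\<dots> = x^(q+1)" unfolding x_def by (simp add: algebra_simps)
    finally show ?thesis using Cq_nonneg[of q]
      by (metis distrib_left mult_left_mono)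
  qed
  finally show ?case unfolding x_def .
qed

lemma Sp2: "Sp 2 a = real a^3/3 + real a^2/2 + real a/6"
  by (induction a) (simp_all add: Sp_0 Sp_Suc field_simps power2_eq_square power3_eq_cube)

definition dl :: "nat \<Rightarrow> nat \<Rightarrow> real" where
  "dl i a = Sp (2*i) a / real a^(2*i) - real a/(2*i+1) - 1/2 - i/(6*real a)"

lemma dl_bound: assumes "i \<ge> 1" shows "\<exists>C. \<forall>a\<ge>1. \<bar>dl i a\<bar> \<le> C / real a^3"
proof (cases "i = 1")
  case True
  have "dl i a = 0" if "a \<ge> 1" for a
  proof -
    have "Sp (2*i) a = Sp 2 a" using True by simp
    then show ?thesis using that unfolding dl_def Sp2 True by (simp add: field_simps power2_eq_square power3_eq_cube)
  qed
  then show ?thesis by (intro exI[of _ 0]) auto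
next
  case False
  define q where "q = 2*i - 4"
  have p: "2*i = q+4" using False assms unfolding q_def by simp
  have pr0: "2 * real i = real q + 4" using arg_cong[OF p, of real] by simp
  have "\<bar>dl i a\<bar> \<le> Cq q / real a^3" if a: "a \<ge> 1" for a
  proof -
    define z where "z = real a"
    have z: "z \<ge> 1" using a unfolding z_def by simp
    have "Qf q z / z^(q+4) = z/(2*i+1) + 1/2 + i/(6*z)"
    proof -
      have zq: "z^q > 0" using z by simp
      have z0: "z \<noteq> 0" using z by auto
      have t1: "z^(q+5)/(q+5)/z^(q+4) = z/(q+5)" using zq z0 by (simp add: power_add eval_nat_numeral)
      have t2: "z^(q+4)/2/z^(q+4) = 1/2" using zq z0 by (simp add: power_add eval_nat_numeral)
      have t3: "(q+4)*z^(q+3)/12/z^(q+4) = (q+4)/(12*z)" using zq z0 by (simp add: power_add eval_nat_numeral)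
      have "Qf q z / z^(q+4) = z^(q+5)/(q+5)/z^(q+4) + z^(q+4)/2/z^(q+4) + (q+4)*z^(q+3)/12/z^(q+4)"
        unfolding Qf_def by (simp add: add_divide_distrib)
      also have "\<dots> = z/(q+5) + 1/2 + (q+4)/(12*z)" unfolding t1 t2 t3 ..
      also have "\<dots> = z/(2*i+1) + 1/2 + i/(6*z)"
      proof -
        have pr: "2 * real i = real q + 4" using arg_cong[OF p, of real] by simp
        have e5: "real q + 5 = 2 * real i + 1" and e4: "real q + 4 = 2 * real i" using pr by linarith+
        show ?thesis by (simp add: e5 e4)
      qed
      finally show ?thesis .
    qed
    hence "dl i a = (Sp (q+4) a - Qf q z) / z^(q+4)"
    proof -
      assume h: "Qf q z / z^(q+4) = z/(2*i+1) + 1/2 + i/(6*z)"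
      have "dl i a = Sp (q+4) a / z^(q+4) - (z/(2*i+1) + 1/2 + i/(6*z))"
        unfolding dl_def z_def p using pr0 by simp
      also have "\<dots> = Sp (q+4) a / z^(q+4) - Qf q z / z^(q+4)" unfolding h ..
      also have "\<dots> = (Sp (q+4) a - Qf q z) / z^(q+4)" by (simp add: diff_divide_distrib)
      finally show ?thesis .
    qed
    hence "\<bar>dl i a\<bar> = \<bar>Sp (q+4) a - Qf q z\<bar> / z^(q+4)" using z by simp
    also have "\<dots> \<le> Cq q * z^(q+1) / z^(q+4)"
      using S_bound[of q a] z unfolding z_def by (intro divide_right_mono) auto
    also have "\<dots> = Cq q / z^3" using z by (simp add: field_simps power_add eval_nat_numeral)
    finally show ?thesis unfolding z_def .
  qed
  then show ?thesis by blast
qed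

lemma small_from_bound:
  fixes h :: "nat \<Rightarrow> real"
  assumes Ast: "Ast \<ge> 1" and b: "\<And>a. a \<ge> Ast \<Longrightarrow> \<bar>h a\<bar> \<le> K / real a ^ (m+1)"
  shows "h \<in> o(\<lambda>a. 1 / real a ^ m)"
proof (rule landau_o.smallI)
  fix c :: real assume c: "c > 0"
  obtain N :: nat where N: "real N \<ge> K / c" using real_arch_simple by blast
  have "eventually (\<lambda>a. a \<ge> max Ast N) at_top" by (rule eventually_ge_at_top)
  then show "eventually (\<lambda>a. norm (h a) \<le> c * norm (1 / real a ^ m)) at_top"
  proof (rule eventually_mono)
    fix a assume a: "a \<ge> max Ast N"
    have a1: "real a \<ge> 1" using a Ast by simp
    have "\<bar>h a\<bar> \<le> K / real a ^ (m+1)" using b a by simp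
    also have "\<dots> = (K / real a) * (1 / real a ^ m)" by simp
    also have "\<dots> \<le> c * (1 / real a ^ m)"
    proof (intro mult_right_mono)
      have "K \<le> c * real N" using N c by (simp add: divide_le_eq mult.commute)
      also have "\<dots> \<le> c * real a" using a c by (intro mult_left_mono) auto
      finally show "K / real a \<le> c" using a1 by (simp add: divide_le_eq mult.commute)
    qed simp
    finally show "norm (h a) \<le> c * norm (1 / real a ^ m)" by simp
  qed
qed

lemma sym_sum:
  fixes g :: "int \<Rightarrow> real"
  assumes "\<And>k. g (-k) = g k"
  shows "(\<Sum>k\<in>{-int b..int b}. g k) = g 0 + 2 * (\<Sum>k=1..b. g (int k))"
proof (induction b)
  case 0 then show ?case by simp
next
  case (Suc b)
  have e: "{-int (Suc b)..int (Suc b)} = insert (-(int b+1)) (insert (int b + 1) {-int b..int b})" by auto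
  have "(\<Sum>k\<in>{-int (Suc b)..int (Suc b)}. g k) = g (-(int b+1)) + g (int b+1) + (\<Sum>k\<in>{-int b..int b}. g k)"
    unfolding e by simp
  moreover have "g (int b + 1) = g (1 + int b)" by (simp add: add.commute)
  ultimately show ?case using Suc assms[of "int b + 1"] by simp
qed

lemma sum_to_a:
  fixes h :: "nat \<Rightarrow> real"
  assumes "a \<ge> 1" "h a = 0"
  shows "(\<Sum>k=1..a-1. h k) = (\<Sum>k=1..a. h k)"
proof -
  have "{1..a} = insert a {1..a-1}" using assms by auto
  then show ?thesis using assms by simp
qed

lemma expand1:
  assumes a: "a \<ge> 1"
  shows "(\<Sum>k=1..a. (1 - real k^2/real a^2)^n) = (\<Sum>i\<le>n. real (n choose i) * (-1)^i * (Sp (2*i) a / real a^(2*i)))"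
proof -
  have "(\<Sum>k=1..a. (1 - real k^2/real a^2)^n) = (\<Sum>k=1..a. \<Sum>i\<le>n. real (n choose i) * (-1)^i * (real k^(2*i) / real a^(2*i)))"
  proof (intro sum.cong refl)
    fix k
    have "(1 - real k^2/real a^2)^n = (1 - (real k/real a)^2)^n" by (simp add: power_divide)
    also have "\<dots> = (\<Sum>i\<le>n. real (n choose i) * (-1)^i * (real k/real a)^(2*i))" by (rule binom_sq[symmetric])
    finally show "(1 - real k^2/real a^2)^n = (\<Sum>i\<le>n. real (n choose i) * (-1)^i * (real k^(2*i) / real a^(2*i)))"
      by (simp add: power_divide)
  qed
  also have "\<dots> = (\<Sum>i\<le>n. \<Sum>k=1..a. real (n choose i) * (-1)^i * (real k^(2*i) / real a^(2*i)))"
    by (rule sum.swap)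
  also have "\<dots> = (\<Sum>i\<le>n. real (n choose i) * (-1)^i * (Sp (2*i) a / real a^(2*i)))"
    by (simp add: Sp_def sum_distrib_left sum_divide_distrib)
  finally show ?thesis .
qed

lemma expand2:
  assumes a: "a \<ge> 1"
  shows "(\<Sum>k=1..a. real k^2 * (1 - real k^2/real a^2)^n) = real a^2 * (\<Sum>i\<le>n. real (n choose i) * (-1)^i * (Sp (2*(i+1)) a / real a^(2*(i+1))))"
proof -
  have a0: "real a \<noteq> 0" using a by simp
  have "(\<Sum>k=1..a. real k^2 * (1 - real k^2/real a^2)^n) = (\<Sum>k=1..a. \<Sum>i\<le>n. real a^2 * (real (n choose i) * (-1)^i * (real k^(2*(i+1)) / real a^(2*(i+1)))))"
  proof (intro sum.cong refl)
    fix k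
    have "(1 - real k^2/real a^2)^n = (1 - (real k/real a)^2)^n" by (simp add: power_divide)
    also have "\<dots> = (\<Sum>i\<le>n. real (n choose i) * (-1)^i * (real k/real a)^(2*i))" by (rule binom_sq[symmetric])
    finally have "real k^2 * (1 - real k^2/real a^2)^n = (\<Sum>i\<le>n. real k^2 * (real (n choose i) * (-1)^i * (real k/real a)^(2*i)))"
      by (simp add: sum_distrib_left)
    also have "\<dots> = (\<Sum>i\<le>n. real a^2 * (real (n choose i) * (-1)^i * (real k^(2*(i+1)) / real a^(2*(i+1)))))"
    proof (intro sum.cong refl)
      fix i
      have "real k^2 * (real k/real a)^(2*i) = real a^2 * (real k^(2*(i+1)) / real a^(2*(i+1)))"
      proof -
        have gen: "K * (X/Y) = A * (X*K/(Y*A))" if "A \<noteq> 0" for A K X Y :: real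
          using that by (cases "Y = 0") (auto simp: field_simps)
        have e2: "2*(i+1) = 2*i + 2" by simp
        have "real k^2 * (real k/real a)^(2*i) = real k^2 * (real k^(2*i)/real a^(2*i))"
          by (simp only: power_divide)
        also have "\<dots> = real a^2 * (real k^(2*i) * real k^2 / (real a^(2*i) * real a^2))"
          by (rule gen) (use a0 in simp)
        also have "\<dots> = real a^2 * (real k^(2*(i+1)) / real a^(2*(i+1)))"
          unfolding e2 power_add by simp
        finally show ?thesis .
      qed
      then show "real k^2 * (real (n choose i) * (-1)^i * (real k/real a)^(2*i)) = real a^2 * (real (n choose i) * (-1)^i * (real k^(2*(i+1)) / real a^(2*(i+1))))"
      proof -
        assume h: "real k^2 * (real k/real a)^(2*i) = real a^2 * (real k^(2*(i+1)) / real a^(2*(i+1)))"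
        define c where "c = real (n choose i) * (-1)^i"
        have "real k^2 * (c * (real k/real a)^(2*i)) = c * (real k^2 * (real k/real a)^(2*i))"
          by (rule mult.left_commute)
        also have "\<dots> = c * (real a^2 * (real k^(2*(i+1)) / real a^(2*(i+1))))" by (simp only: h)
        also have "\<dots> = real a^2 * (c * (real k^(2*(i+1)) / real a^(2*(i+1))))" by (rule mult.left_commute)
        finally show ?thesis unfolding c_def .
      qed
    qed
    finally show "real k^2 * (1 - real k^2/real a^2)^n = (\<Sum>i\<le>n. real a^2 * (real (n choose i) * (-1)^i * (real k^(2*(i+1)) / real a^(2*(i+1)))))" .
  qed
  also have "\<dots> = (\<Sum>i\<le>n. \<Sum>k=1..a. real a^2 * (real (n choose i) * (-1)^i * (real k^(2*(i+1)) / real a^(2*(i+1)))))"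
    by (rule sum.swap)
  also have "\<dots> = real a^2 * (\<Sum>i\<le>n. real (n choose i) * (-1)^i * (Sp (2*(i+1)) a / real a^(2*(i+1))))"
    by (simp add: Sp_def sum_distrib_left sum_divide_distrib)
  finally show ?thesis .
qed


lemma range_conv: assumes "a \<ge> 1" shows "{-(int a - 1)..int a - 1} = {-int (a-1)..int (a-1)}"
  using assms by (simp add: of_nat_diff)

lemma f_formula:
  assumes n: "n \<ge> 1" and a: "a \<ge> 1"
  shows "tsallis_f n a = 1 + 2 * (\<Sum>i\<le>n. real (n choose i) * (-1)^i * (Sp (2*i) a / real a^(2*i)))"
proof -
  define g where "g k = (1 - (real_of_int k)^2 / (real a)^2) ^ n" for k :: int
  have gs: "g (-k) = g k" for k unfolding g_def by simp
  have "tsallis_f n a = (\<Sum>k\<in>{-int (a-1)..int (a-1)}. g k)"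
    unfolding tsallis_f_def range_conv[OF a] g_def ..
  also have "\<dots> = g 0 + 2 * (\<Sum>k=1..a-1. g (int k))" by (rule sym_sum) (rule gs)
  also have "(\<Sum>k=1..a-1. g (int k)) = (\<Sum>k=1..a-1. (1 - real k^2/real a^2)^n)"
    unfolding g_def by simp
  also have "\<dots> = (\<Sum>k=1..a. (1 - real k^2/real a^2)^n)"
    by (rule sum_to_a) (use a n in auto)
  also have "\<dots> = (\<Sum>i\<le>n. real (n choose i) * (-1)^i * (Sp (2*i) a / real a^(2*i)))"
    by (rule expand1[OF a])
  finally show ?thesis unfolding g_def by simp
qed

definition Wsum :: "nat \<Rightarrow> nat \<Rightarrow> real" where
  "Wsum n a = (\<Sum>k\<in>{-(int a - 1)..int a - 1}. (real_of_int k)^2 * (1 - (real_of_int k)^2 / (real a)^2) ^ n)"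

lemma W_formula:
  assumes n: "n \<ge> 1" and a: "a \<ge> 1"
  shows "Wsum n a = 2 * real a^2 * (\<Sum>i\<le>n. real (n choose i) * (-1)^i * (Sp (2*(i+1)) a / real a^(2*(i+1))))"
proof -
  define g where "g k = (real_of_int k)^2 * (1 - (real_of_int k)^2 / (real a)^2) ^ n" for k :: int
  have gs: "g (-k) = g k" for k unfolding g_def by simp
  have "Wsum n a = (\<Sum>k\<in>{-int (a-1)..int (a-1)}. g k)"
    unfolding Wsum_def range_conv[OF a] g_def ..
  also have "\<dots> = g 0 + 2 * (\<Sum>k=1..a-1. g (int k))" by (rule sym_sum) (rule gs)
  also have "(\<Sum>k=1..a-1. g (int k)) = (\<Sum>k=1..a-1. real k^2 * (1 - real k^2/real a^2)^n)"
    unfolding g_def by simp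
  also have "\<dots> = (\<Sum>k=1..a. real k^2 * (1 - real k^2/real a^2)^n)"
    by (rule sum_to_a) (use a n in auto)
  also have "\<dots> = real a^2 * (\<Sum>i\<le>n. real (n choose i) * (-1)^i * (Sp (2*(i+1)) a / real a^(2*(i+1))))"
    by (rule expand2[OF a])
  finally show ?thesis unfolding g_def by simp
qed

lemma U_eq:
  assumes a: "a \<ge> 1"
  shows "tsallis_U n a = Wsum n a / tsallis_f n a"
proof -
  have "tsallis_U n a = (\<Sum>k\<in>{-(int a - 1)..int a - 1}. (real_of_int k)^2 * (1 - (real_of_int k)^2 / (real a)^2) ^ n / tsallis_f n a)"
    unfolding tsallis_U_def tsallis_p_def by (intro sum.cong refl) auto
  also have "\<dots> = Wsum n a / tsallis_f n a"
    unfolding Wsum_def by (simp add: sum_divide_distrib)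
  finally show ?thesis .
qed

lemma alt0: assumes "n \<ge> 1" shows "(\<Sum>i\<le>n. real (n choose i) * (-1)^i * c) = 0"
proof -
  have "(\<Sum>i\<le>n. real (n choose i) * (-1)^i * c) = (\<Sum>i\<le>n. (-1)^i * of_nat (n choose i)) * c"
    by (simp add: sum_distrib_right sum_distrib_left mult_ac)
  also have "\<dots> = 0" using choose_alternating_sum[of n, where 'a=real] assms by simp
  finally show ?thesis .
qed

lemma alt1: assumes "n \<ge> 2" shows "(\<Sum>i\<le>n. real (n choose i) * (-1)^i * (real i * c)) = 0"
proof -
  have "(\<Sum>i\<le>n. real (n choose i) * (-1)^i * (real i * c)) = (\<Sum>i\<le>n. (-1)^i * of_nat i * of_nat (n choose i)) * c"
    by (simp add: sum_distrib_right sum_distrib_left mult_ac)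
  also have "\<dots> = 0" using choose_alternating_linear_sum[of n, where 'a=real] assms by simp
  finally show ?thesis .
qed

lemma T_dec: "Sp (2*i) a / real a^(2*i) = real a/(2*i+1) + 1/2 + i/(6*real a) + dl i a"
  unfolding dl_def by simp

lemma dl0: "dl 0 a = -1/2"
  unfolding dl_def Sp_def by simp

lemma f_err:
  assumes n: "n \<ge> 2" and a: "a \<ge> 1"
  shows "tsallis_f n a - 2 * real a * PI n 1 = 2 * (\<Sum>i\<in>{1..n}. real (n choose i) * (-1)^i * dl i a)"
proof -
  define c where "c i = real (n choose i) * (-1)^i" for i
  have "(\<Sum>i\<le>n. c i * (Sp (2*i) a / real a^(2*i)))
      = (\<Sum>i\<le>n. c i * (real a/(2*i+1)) + c i * (1/2) + c i * (real i * (1/(6*real a))) + c i * dl i a)"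
    unfolding T_dec by (intro sum.cong refl) (simp add: distrib_left)
  also have "\<dots> = (\<Sum>i\<le>n. c i * (real a/(2*i+1))) + (\<Sum>i\<le>n. c i * (1/2)) + (\<Sum>i\<le>n. c i * (real i * (1/(6*real a)))) + (\<Sum>i\<le>n. c i * dl i a)"
    by (simp add: sum.distrib)
  also have "(\<Sum>i\<le>n. c i * (real a/(2*i+1))) = real a * PI n 1"
    unfolding PI_def c_def sum_distrib_left by (intro sum.cong refl) simp
  also have "(\<Sum>i\<le>n. c i * (1/2)) = 0" unfolding c_def by (rule alt0) (use n in simp)
  also have "(\<Sum>i\<le>n. c i * (real i * (1/(6*real a)))) = 0" unfolding c_def by (rule alt1[OF n])
  also have "(\<Sum>i\<le>n. c i * dl i a) = c 0 * dl 0 a + (\<Sum>i\<in>{1..n}. c i * dl i a)"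
  proof -
    have "{..n} = insert 0 {1..n}" by auto
    then show ?thesis by simp
  qed
  also have "c 0 * dl 0 a = -1/2" unfolding dl0 c_def by simp
  finally have X: "(\<Sum>i\<le>n. c i * (Sp (2*i) a / real a^(2*i))) = real a * PI n 1 + 0 + 0 + (-1/2 + (\<Sum>i\<in>{1..n}. c i * dl i a))" .
  have F: "tsallis_f n a = 1 + 2 * (\<Sum>i\<le>n. c i * (Sp (2*i) a / real a^(2*i)))"
    using f_formula[OF _ a] n unfolding c_def by simp
  have "tsallis_f n a - 2 * real a * PI n 1 = 2 * (\<Sum>i\<in>{1..n}. c i * dl i a)"
    unfolding F X by (simp add: algebra_simps)
  then show ?thesis unfolding c_def .
qed

lemma W_err:
  assumes n: "n \<ge> 2" and a: "a \<ge> 1"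
  shows "Wsum n a - 2 * real a^3 * KI n 1 = 2 * real a^2 * (\<Sum>i\<le>n. real (n choose i) * (-1)^i * dl (i+1) a)"
proof -
  define c where "c i = real (n choose i) * (-1)^i" for i
  have Td: "Sp (2*(i+1)) a / real a^(2*(i+1)) = real a/(2*i+3) + 1/2 + (real i + 1) * (1/(6*real a)) + dl (i+1) a" for i
    unfolding T_dec by (simp add: algebra_simps)
  have "(\<Sum>i\<le>n. c i * (Sp (2*(i+1)) a / real a^(2*(i+1))))
      = (\<Sum>i\<le>n. c i * (real a/(2*i+3)) + c i * (1/2) + (c i * (real i * (1/(6*real a))) + c i * (1/(6*real a))) + c i * dl (i+1) a)"
    unfolding Td by (intro sum.cong refl) (simp add: distrib_left distrib_right add_divide_distrib)
  also have "\<dots> = (\<Sum>i\<le>n. c i * (real a/(2*i+3))) + (\<Sum>i\<le>n. c i * (1/2)) + ((\<Sum>i\<le>n. c i * (real i * (1/(6*real a)))) + (\<Sum>i\<le>n. c i * (1/(6*real a)))) + (\<Sum>i\<le>n. c i * dl (i+1) a)"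
    by (simp add: sum.distrib)
  also have "(\<Sum>i\<le>n. c i * (real a/(2*i+3))) = real a * KI n 1"
    unfolding KI_def c_def sum_distrib_left by (intro sum.cong refl) simp
  also have "(\<Sum>i\<le>n. c i * (1/2)) = 0" unfolding c_def by (rule alt0) (use n in simp)
  also have "(\<Sum>i\<le>n. c i * (1/(6*real a))) = 0" unfolding c_def by (rule alt0) (use n in simp)
  also have "(\<Sum>i\<le>n. c i * (real i * (1/(6*real a)))) = 0" unfolding c_def by (rule alt1[OF n])
  finally have X: "(\<Sum>i\<le>n. c i * (Sp (2*(i+1)) a / real a^(2*(i+1)))) = real a * KI n 1 + 0 + (0 + 0) + (\<Sum>i\<le>n. c i * dl (i+1) a)" .
  have F: "Wsum n a = 2 * real a^2 * (\<Sum>i\<le>n. c i * (Sp (2*(i+1)) a / real a^(2*(i+1))))"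
    using W_formula[OF _ a] n unfolding c_def by simp
  have "Wsum n a - 2 * real a^3 * KI n 1 = 2 * real a^2 * (\<Sum>i\<le>n. c i * dl (i+1) a)"
    unfolding F X by (simp add: algebra_simps power2_eq_square power3_eq_cube)
  then show ?thesis unfolding c_def .
qed


lemma Cd_exists: "\<exists>Cd. \<forall>i a. i \<ge> 1 \<longrightarrow> a \<ge> 1 \<longrightarrow> \<bar>dl i a\<bar> \<le> Cd i / real a^3"
proof -
  have "\<forall>i. \<exists>C. i \<ge> 1 \<longrightarrow> (\<forall>a\<ge>1. \<bar>dl i a\<bar> \<le> C / real a^3)"
    using dl_bound by blast
  then obtain Cd where "\<forall>i. i \<ge> 1 \<longrightarrow> (\<forall>a\<ge>1. \<bar>dl i a\<bar> \<le> Cd i / real a^3)"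
    by metis
  then show ?thesis by blast
qed

lemma sum_dl_bound:
  assumes Cd: "\<And>i a. i \<ge> 1 \<Longrightarrow> a \<ge> 1 \<Longrightarrow> \<bar>dl i a\<bar> \<le> Cd i / real a^3"
    and h: "\<And>i. i \<in> I \<Longrightarrow> h i \<ge> 1" and a: "a \<ge> 1"
  shows "\<bar>\<Sum>i\<in>I. real (n choose i) * (-1)^i * dl (h i) a\<bar> \<le> (\<Sum>i\<in>I. real (n choose i) * Cd (h i)) / real a^3"
proof -
  have "\<bar>\<Sum>i\<in>I. real (n choose i) * (-1)^i * dl (h i) a\<bar> \<le> (\<Sum>i\<in>I. \<bar>real (n choose i) * (-1)^i * dl (h i) a\<bar>)"
    by (rule sum_abs)
  also have "\<dots> \<le> (\<Sum>i\<in>I. real (n choose i) * (Cd (h i) / real a^3))"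
  proof (intro sum_mono)
    fix i assume i: "i \<in> I"
    have "\<bar>real (n choose i) * (-1)^i * dl (h i) a\<bar> = real (n choose i) * \<bar>dl (h i) a\<bar>"
      by (simp add: abs_mult power_abs)
    also have "\<dots> \<le> real (n choose i) * (Cd (h i) / real a^3)"
      using Cd[OF h[OF i] a] by (intro mult_left_mono) auto
    finally show "\<bar>real (n choose i) * (-1)^i * dl (h i) a\<bar> \<le> real (n choose i) * (Cd (h i) / real a^3)" .
  qed
  also have "\<dots> = (\<Sum>i\<in>I. real (n choose i) * Cd (h i)) / real a^3"
    by (simp add: sum_divide_distrib)
  finally show ?thesis .
qed

lemma ratio_bound:
  fixes P a f W K e1 e2 B1 B2 :: real
  assumes P: "P > 0" and a: "a \<ge> 1" and f: "f \<ge> a * P"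
    and W: "W = 2*a^3*K + e1" and fe: "f = 2*a*P + e2"
    and b1: "\<bar>e1\<bar> \<le> B1/a" and b2: "\<bar>e2\<bar> \<le> B2/a^3" and K: "K \<ge> 0"
  shows "\<bar>W/f - a^2*K/P\<bar> \<le> ((B1*P + K*B2)/P^2) / a^2"
proof -
  have a0: "a > 0" using a by simp
  have "a * P > 0" using a0 P by simp
  then have fpos: "f > 0" using f by linarith
  have num: "W*P - a^2*K*f = e1*P - a^2*K*e2"
    unfolding W fe by (simp add: algebra_simps power2_eq_square power3_eq_cube)
  have "W/f - a^2*K/P = (W*P - a^2*K*f)/(f*P)"
    using fpos P by (simp add: field_simps)
  also have "\<dots> = (e1*P - a^2*K*e2)/(f*P)" unfolding num ..
  finally have eq: "W/f - a^2*K/P = (e1*P - a^2*K*e2)/(f*P)" .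
  have "\<bar>e1*P - a^2*K*e2\<bar> \<le> \<bar>e1\<bar>*P + a^2*K*\<bar>e2\<bar>"
  proof -
    have "\<bar>e1*P - a^2*K*e2\<bar> \<le> \<bar>e1*P\<bar> + \<bar>a^2*K*e2\<bar>" by (rule abs_triangle_ineq4)
    also have "\<bar>e1*P\<bar> = \<bar>e1\<bar>*P" using P by (simp add: abs_mult)
    also have "\<bar>a^2*K*e2\<bar> = a^2*K*\<bar>e2\<bar>" using K by (simp add: abs_mult)
    finally show ?thesis .
  qed
  also have "\<dots> \<le> (B1/a)*P + a^2*K*(B2/a^3)"
    using b1 b2 P K by (intro add_mono mult_right_mono mult_left_mono) auto
  also have "\<dots> = (B1*P + K*B2)/a"
    using a0 by (simp add: field_simps power2_eq_square power3_eq_cube)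
  finally have nb: "\<bar>e1*P - a^2*K*e2\<bar> \<le> (B1*P + K*B2)/a" .
  have den: "f*P \<ge> a*P*P" using f P by (simp add: mult_right_mono)
  have "\<bar>W/f - a^2*K/P\<bar> = \<bar>e1*P - a^2*K*e2\<bar>/(f*P)" unfolding eq using fpos P by simp
  also have "\<dots> \<le> ((B1*P + K*B2)/a)/(f*P)"
    using nb fpos P by (intro divide_right_mono) auto
  also have "\<dots> \<le> ((B1*P + K*B2)/a)/(a*P*P)"
  proof (rule divide_left_mono)
    show "0 \<le> (B1*P + K*B2)/a" using nb by linarith
    show "a*P*P \<le> f*P" by (rule den)
    show "0 < f*P * (a*P*P)" using fpos P a0 by simp
  qed
  also have "\<dots> = ((B1*P + K*B2)/P^2) / a^2"
    by (simp add: field_simps power2_eq_square)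
  finally show ?thesis .
qed


lemma part1: assumes a: "a \<ge> 1" shows "tsallis_f 1 a = 4 * real a / 3 - 1 / (3 * real a)"
proof -
  have s0: "Sp 0 a = real a" unfolding Sp_def by simp
  have "tsallis_f 1 a = 1 + 2 * (Sp 0 a - Sp 2 a / real a^2)"
    using f_formula[of 1 a] a by simp
  also have "\<dots> = 4 * real a / 3 - 1 / (3 * real a)"
    unfolding s0 Sp2 using a by (simp add: field_simps power2_eq_square power3_eq_cube)
  finally show ?thesis .
qed

lemma part2:
  assumes n: "n \<ge> 2"
  shows "\<exists>K. \<forall>a\<ge>1. \<bar>tsallis_f n a - 2 * real a * PI n 1\<bar> \<le> K / real a^3"
proof -
  obtain Cd where Cd: "\<And>i a. i \<ge> 1 \<Longrightarrow> a \<ge> 1 \<Longrightarrow> \<bar>dl i a\<bar> \<le> Cd i / real a^3"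
    using Cd_exists by blast
  have "\<bar>tsallis_f n a - 2 * real a * PI n 1\<bar> \<le> 2 * (\<Sum>i\<in>{1..n}. real (n choose i) * Cd i) / real a^3"
    if a: "a \<ge> 1" for a
  proof -
    have "\<bar>tsallis_f n a - 2 * real a * PI n 1\<bar> = 2 * \<bar>\<Sum>i\<in>{1..n}. real (n choose i) * (-1)^i * dl i a\<bar>"
      unfolding f_err[OF n a] by simp
    also have "\<dots> \<le> 2 * ((\<Sum>i\<in>{1..n}. real (n choose i) * Cd i) / real a^3)"
      using sum_dl_bound[where Cd=Cd and I="{1..n}" and h="\<lambda>i. i" and a=a and n=n, OF Cd] a by auto
    finally show ?thesis by simp
  qed
  then have "\<forall>a\<ge>1. \<bar>tsallis_f n a - 2 * real a * PI n 1\<bar> \<le> 2 * (\<Sum>i\<in>{1..n}. real (n choose i) * Cd i) / real a^3"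
    by blast
  then show ?thesis by (rule exI[of _ "2 * (\<Sum>i\<in>{1..n}. real (n choose i) * Cd i)"])
qed

lemma part3:
  assumes n: "n \<ge> 2"
  shows "\<exists>K. \<forall>a\<ge>1. \<bar>Wsum n a - 2 * real a^3 * KI n 1\<bar> \<le> K / real a"
proof -
  obtain Cd where Cd: "\<And>i a. i \<ge> 1 \<Longrightarrow> a \<ge> 1 \<Longrightarrow> \<bar>dl i a\<bar> \<le> Cd i / real a^3"
    using Cd_exists by blast
  define S where "S = (\<Sum>i\<le>n. real (n choose i) * Cd (i+1))"
  have "\<bar>Wsum n a - 2 * real a^3 * KI n 1\<bar> \<le> 2 * S / real a"
    if a: "a \<ge> 1" for a
  proof -
    have a0: "real a > 0" using a by simp
    have "\<bar>Wsum n a - 2 * real a^3 * KI n 1\<bar> = 2 * real a^2 * \<bar>\<Sum>i\<le>n. real (n choose i) * (-1)^i * dl (i+1) a\<bar>"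
      unfolding W_err[OF n a] by (simp add: abs_mult)
    also have "\<dots> \<le> 2 * real a^2 * (S / real a^3)"
      using sum_dl_bound[where Cd=Cd and I="{..n}" and h="\<lambda>i. i+1" and a=a and n=n, OF Cd] a unfolding S_def
      by (intro mult_left_mono) auto
    also have "\<dots> = 2 * S / real a" using a0 by (simp add: field_simps power2_eq_square power3_eq_cube)
    finally show ?thesis .
  qed
  then have "\<forall>a\<ge>1. \<bar>Wsum n a - 2 * real a^3 * KI n 1\<bar> \<le> 2 * S / real a" by blast
  then show ?thesis by (rule exI[of _ "2 * S"])
qed

theorem theorem7:
  shows "(\<forall>a::nat. a \<ge> 1 \<longrightarrow> tsallis_f 1 a = 4 * real a / 3 - 1 / (3 * real a))
    \<and> (\<forall>n::nat. n \<ge> 2 \<longrightarrow>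
           (\<lambda>a::nat. tsallis_f n a
              - 2 ^ (2*n+1) * (fact n)^2 / fact (2*n+1) * real a)
           \<in> o(\<lambda>a. 1 / (real a)^2))
    \<and> (\<forall>n::nat. n \<ge> 2 \<longrightarrow>
           (\<lambda>a::nat. tsallis_U n a - (real a)^2 / (real (2*n+1) + 2))
           \<in> o(\<lambda>a. 1 / real a))"
proof (intro conjI allI impI)
  fix a :: nat assume "a \<ge> 1"
  then show "tsallis_f 1 a = 4 * real a / 3 - 1 / (3 * real a)" by (rule part1)
next
  fix n :: nat assume n: "n \<ge> 2"
  obtain K where K: "\<And>a. a \<ge> 1 \<Longrightarrow> \<bar>tsallis_f n a - 2 * real a * PI n 1\<bar> \<le> K / real a^3"
    using part2[OF n] by blast
  have c: "2 ^ (2*n+1) * (fact n)^2 / fact (2*n+1) = 2 * PI n 1" using PI_closed[of n] by simp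
  show "(\<lambda>a::nat. tsallis_f n a - 2 ^ (2*n+1) * (fact n)^2 / fact (2*n+1) * real a) \<in> o(\<lambda>a. 1 / (real a)^2)"
    unfolding c
  proof (rule small_from_bound[where Ast=1 and K=K])
    fix a :: nat assume "a \<ge> 1"
    then show "\<bar>tsallis_f n a - 2 * PI n 1 * real a\<bar> \<le> K / real a ^ (2+1)"
      using K[of a] by (simp add: mult_ac)
  qed simp
next
  fix n :: nat assume n: "n \<ge> 2"
  obtain B2 where B2: "\<And>a. a \<ge> 1 \<Longrightarrow> \<bar>tsallis_f n a - 2 * real a * PI n 1\<bar> \<le> B2 / real a^3"
    using part2[OF n] by blast
  obtain B1 where B1: "\<And>a. a \<ge> 1 \<Longrightarrow> \<bar>Wsum n a - 2 * real a^3 * KI n 1\<bar> \<le> B1 / real a"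
    using part3[OF n] by blast
  define P where "P = PI n 1"
  define Kk where "Kk = KI n 1"
  have P: "P > 0" unfolding P_def by (rule PI_pos)
  have KP: "Kk = P / (2*n+3)" unfolding Kk_def P_def by (rule KI_PI)
  have Kk0: "Kk \<ge> 0" using P unfolding KP by simp
  have B2nn: "B2 \<ge> 0" using B2[of 1] by simp
  obtain N :: nat where N: "real N \<ge> B2 / P" using real_arch_simple by blast
  define Ast where "Ast = max 1 N"
  have bnd: "\<bar>tsallis_U n a - (real a)^2 / (real (2*n+1) + 2)\<bar> \<le> ((B1*P + Kk*B2)/P^2) / real a ^ (1+1)"
    if a: "a \<ge> Ast" for a
  proof -
    have a1: "a \<ge> 1" using a unfolding Ast_def by simp
    have aN: "real a \<ge> B2 / P" using a N unfolding Ast_def by simp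
    have ra1: "real a \<ge> 1" using a1 by simp
    define e1 where "e1 = Wsum n a - 2 * real a^3 * Kk"
    define e2 where "e2 = tsallis_f n a - 2 * real a * P"
    have b1: "\<bar>e1\<bar> \<le> B1 / real a" unfolding e1_def Kk_def using B1[OF a1] .
    have b2: "\<bar>e2\<bar> \<le> B2 / real a^3" unfolding e2_def P_def using B2[OF a1] .
    have a3: "real a^3 \<ge> 1" using ra1 by (simp add: one_le_power)
    have "B2 * 1 \<le> B2 * real a^3" using B2nn a3 by (intro mult_left_mono) auto
    then have "B2 / real a^3 \<le> B2" using a3 B2nn by (simp add: divide_le_eq)
    also have "B2 \<le> real a * P" using aN P by (simp add: divide_le_eq)
    finally have "\<bar>e2\<bar> \<le> real a * P" using b2 by linarith
    hence f: "tsallis_f n a \<ge> real a * P" unfolding e2_def by linarith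
    have "\<bar>Wsum n a / tsallis_f n a - (real a)^2*Kk/P\<bar> \<le> ((B1*P + Kk*B2)/P^2) / (real a)^2"
      by (rule ratio_bound[OF P ra1 f _ _ b1 b2 Kk0]) (simp_all add: e1_def e2_def)
    moreover have "(real a)^2 / (real (2*n+1) + 2) = (real a)^2*Kk/P"
    proof -
      have d: "real (2*n+1) + 2 = 2*real n+3" by simp
      have "Kk/P = 1/(2*real n+3)" unfolding KP using P by simp
      then have "(real a)^2*Kk/P = (real a)^2 * (1/(2*real n+3))" by (metis times_divide_eq_right)
      then show ?thesis unfolding d by simp
    qed
    ultimately show ?thesis unfolding U_eq[OF a1] by (simp add: power2_eq_square)
  qed
  have "(\<lambda>a::nat. tsallis_U n a - (real a)^2 / (real (2*n+1) + 2)) \<in> o(\<lambda>a. 1 / real a ^ 1)"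
    by (rule small_from_bound[where Ast=Ast and K="(B1*P + Kk*B2)/P^2", OF _ bnd]) (simp_all add: Ast_def)
  then show "(\<lambda>a::nat. tsallis_U n a - (real a)^2 / (real (2*n+1) + 2)) \<in> o(\<lambda>a. 1 / real a)"
    by simp
qed

end
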